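(* For every integer $t\ge1$, $$-\frac{1}{3t^2}<\frac{S_4(t)}{(-1)^t\binom{-3/2}{t}}-\frac{(-1)^t}{\binom{-3/2}{t}}\frac{\sinh\alpha}{\alpha}+\frac{\cosh\alpha}{2t}<\frac{13}{20t^2}.$$
   Context: $\alpha=\pi/6$. $(a)_m=a(a+1)\cdots(a+m-1)$ is the rising factorial ($(a)_0=1$); $\binom{x}{m}=x(x-1)\cdots(x-m+1)/m!$. For $t\ge0$, $$S_4(t)=\sum_{s=0}^t(-1)^s(1/2-s)_{s+1}\sum_{u=0}^s\frac{(-1)^u(-s)_u}{(s+u+1)!\,(2u)!}\left(\frac{\pi^2}{36}\right)^u.$$ *)

theory Defs
  imports "HOL-Analysis.Analysis"
begin

definition alpha :: real where "alpha = pi / 6"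

definition S4 :: "nat \<Rightarrow> real" where
  "S4 t = (\<Sum>s=0..t. (-1)^s * pochhammer (1/2 - real s) (s+1) *
      (\<Sum>u=0..s. (-1)^u * pochhammer (- real s) u / (fact (s+u+1) * fact (2*u))
                  * (pi^2/36)^u))"

end

theory Submission
  imports Defs
begin



definition qq :: "nat \<Rightarrow> real" where "qq n = pochhammer (1/2) n / fact n"
definition pr :: "nat \<Rightarrow> nat \<Rightarrow> real" where
  "pr u s = (\<Prod>j=1..u. (real s + 1 - real j) / (real s + 1 + real j))"
definition TT :: "nat \<Rightarrow> nat \<Rightarrow> real" where "TT u s = qq s / (real s + 1) * pr u s"

lemma qq_0[simp]: "qq 0 = 1" by (simp add: qq_def)
lemma qq_Suc: "qq (Suc n) = qq n * (2 * real n + 1) / (2 * real n + 2)"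
  by (simp add: qq_def pochhammer_Suc field_simps)
lemma qq_pos: "qq n > 0"
  by (induction n) (simp_all add: qq_Suc)

lemma qq_sq: "qq n ^ 2 \<le> 1 / (2 * real n + 1)"
proof (induction n)
  case 0 then show ?case by simp
next
  case (Suc n)
  have "qq (Suc n) ^ 2 = qq n ^ 2 * ((2 * real n + 1) / (2 * real n + 2))^2"
    by (simp add: qq_Suc power_mult_distrib power_divide)
  also have "\<dots> \<le> 1 / (2 * real n + 1) * ((2 * real n + 1) / (2 * real n + 2))^2"
    by (rule mult_right_mono[OF Suc]) simp
  also have "\<dots> = (2 * real n + 1) / (2 * real n + 2)^2"
    by (simp add: power2_eq_square)
  also have "\<dots> \<le> 1 / (2 * real (Suc n) + 1)"
  proof -
    have "(2 * real n + 1) * (2 * real n + 3) \<le> (2 * real n + 2)^2"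
      by (simp add: power2_eq_square algebra_simps)
    then show ?thesis by (simp add: divide_simps) (simp add: algebra_simps)
  qed
  finally show ?case .
qed

lemma qq_tendsto: "qq \<longlonglongrightarrow> 0"
proof -
  have "(\<lambda>n. qq n ^ 2) \<longlonglongrightarrow> 0"
  proof (rule tendsto_sandwich[of "\<lambda>_. 0" _ _ "\<lambda>n. inverse (real (Suc n))"])
    show "\<forall>\<^sub>F n in sequentially. 0 \<le> qq n ^ 2" by simp
    show "\<forall>\<^sub>F n in sequentially. qq n ^ 2 \<le> inverse (real (Suc n))"
    proof (intro always_eventually allI)
      fix n
      have "qq n ^ 2 \<le> 1 / (2 * real n + 1)" by (rule qq_sq)
      also have "\<dots> \<le> inverse (real (Suc n))" by (simp add: field_simps)
      finally show "qq n ^ 2 \<le> inverse (real (Suc n))" .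
    qed
    show "(\<lambda>n. inverse (real (Suc n))) \<longlonglongrightarrow> 0" by (rule LIMSEQ_inverse_real_of_nat)
  qed simp
  then have "(\<lambda>n. sqrt (qq n ^ 2)) \<longlonglongrightarrow> sqrt 0" by (rule tendsto_real_sqrt)
  then show ?thesis using qq_pos by (simp add: less_imp_le)
qed

lemma pr_0[simp]: "pr 0 s = 1" by (simp add: pr_def)
lemma pr_Suc: "pr (Suc u) s = pr u s * ((real s - real u) / (real s + real u + 2))"
  by (simp add: pr_def prod.cl_ivl_Suc algebra_simps)

lemma pr_zero: "s < u \<Longrightarrow> pr u s = 0"
proof (induction u)
  case 0 then show ?case by simp
next
  case (Suc u)
  show ?case
  proof (cases "s = u")
    case True then show ?thesis by (simp add: pr_Suc)
  next
    case False then have "s < u" using Suc by simp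
    then show ?thesis using Suc by (simp add: pr_Suc)
  qed
qed

lemma pr_bounds: "0 \<le> pr u s \<and> pr u s \<le> 1"
proof (induction u)
  case 0 then show ?case by simp
next
  case (Suc u)
  show ?case
  proof (cases "u \<le> s")
    case True
    have f0: "0 \<le> (real s - real u) / (real s + real u + 2)" using True by simp
    have f1: "(real s - real u) / (real s + real u + 2) \<le> 1" by (simp add: field_simps)
    have "0 \<le> pr u s * ((real s - real u) / (real s + real u + 2))"
      using Suc f0 by (intro mult_nonneg_nonneg) auto
    moreover have "pr u s * ((real s - real u) / (real s + real u + 2)) \<le> 1"
      using Suc f0 f1 by (intro mult_le_one) auto
    ultimately show ?thesis by (simp add: pr_Suc)
  next
    case False then show ?thesis by (simp add: pr_zero)
  qed
qed

lemma pr_lower: "pr u s \<ge> 1 - real u * (real u + 1) / (real s + 2)"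
proof (induction u)
  case 0 then show ?case by simp
next
  case (Suc u)
  show ?case
  proof (cases "u \<le> s")
    case True
    define f where "f = (real s - real u) / (real s + real u + 2)"
    have f0: "0 \<le> f" using True by (simp add: f_def)
    have f1: "1 - f \<le> (2 * real u + 2) / (real s + 2)"
      unfolding f_def by (simp add: field_simps)
    have p1: "pr u s \<le> 1" "0 \<le> pr u s" using pr_bounds by auto
    have "pr (Suc u) s = pr u s - pr u s * (1 - f)" by (simp add: pr_Suc f_def algebra_simps)
    also have "\<dots> \<ge> pr u s - (1 - f)"
    proof -
      have fl: "f \<le> 1" unfolding f_def by (simp add: field_simps)
      have "pr u s * (1 - f) \<le> 1 - f" using p1 fl
        by (intro mult_left_le_one_le) auto
      then show ?thesis by simp
    qed
    finally have "pr (Suc u) s \<ge> pr u s - (1 - f)" .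
    moreover have "pr u s - (1 - f) \<ge> 1 - real (Suc u) * (real (Suc u) + 1) / (real s + 2)"
    proof -
      have e: "real (Suc u) * (real (Suc u) + 1) = real u * (real u + 1) + (2 * real u + 2)"
        by (simp add: algebra_simps)
      have "real (Suc u) * (real (Suc u) + 1) / (real s + 2)
          = real u * (real u + 1) / (real s + 2) + (2 * real u + 2) / (real s + 2)"
        unfolding e by (rule add_divide_distrib)
      then show ?thesis using Suc f1 by linarith
    qed
    ultimately show ?thesis by linarith
  next
    case False
    then have a: "real s + 2 \<le> real u + 1" by simp
    have "real u + 1 \<le> (real u + 1) * (real u + 2)" using mult_left_mono[of 1 "real u + 2" "real u + 1"] by simp
    moreover have "real (Suc u) * (real (Suc u) + 1) = (real u + 1) * (real u + 2)" by (simp add: algebra_simps)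
    ultimately have "real s + 2 \<le> real (Suc u) * (real (Suc u) + 1)"
      using a by linarith
    then have "1 - real (Suc u) * (real (Suc u) + 1) / (real s + 2) \<le> 0"
      by (simp add: field_simps)
    then show ?thesis using False by (simp add: pr_zero)
  qed
qed

lemma pr_shift: "pr u (Suc s) * (real s + 1 - real u) * (real s + 2 + real u) = pr u s * (real s + 1) * (real s + 2)"
proof (induction u)
  case 0 then show ?case by simp
next
  case (Suc u)
  have d: "real s + real u + 2 > 0" "real (Suc s) + real u + 2 > 0" by auto
  have "pr (Suc u) (Suc s) * (real s + 1 - real (Suc u)) * (real s + 2 + real (Suc u))
      = pr u (Suc s) * (real s + 1 - real u) * (real s - real u)"
    using d by (simp add: pr_Suc field_simps)
  also have "\<dots> = (pr u (Suc s) * (real s + 1 - real u) * (real s + 2 + real u)) * (real s - real u) / (real s + real u + 2)"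
    using d by (simp add: field_simps)
  also have "\<dots> = pr u s * (real s + 1) * (real s + 2) * (real s - real u) / (real s + real u + 2)"
    by (simp only: Suc)
  also have "\<dots> = pr (Suc u) s * (real s + 1) * (real s + 2)"
    by (simp add: pr_Suc)
  finally show ?case .
qed




lemma TT_0: "TT 0 s = qq s / (real s + 1)" by (simp add: TT_def)
lemma TT_0_tele: "TT 0 s = 2 * qq s - 2 * qq (Suc s)"
  by (simp add: TT_0 qq_Suc field_simps)
lemma TT_zero: "s < u \<Longrightarrow> TT u s = 0" by (simp add: TT_def pr_zero)
lemma TT_nonneg: "0 \<le> TT u s"
  using pr_bounds[of u s] qq_pos[of s] by (simp add: TT_def)
lemma TT_le: "TT u s \<le> TT 0 s"
proof -
  have "qq s / (real s + 1) * pr u s \<le> qq s / (real s + 1)"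
    using pr_bounds[of u s] qq_pos[of s] by (intro mult_left_le) auto
  then show ?thesis by (simp add: TT_def)
qed

definition VV :: "nat \<Rightarrow> real" where "VV s = qq s / ((real s + 1) * (real s + 2))"

lemma TT_lower: "TT u s \<ge> TT 0 s - real u * (real u + 1) * VV s"
proof -
  have a: "0 \<le> qq s / (real s + 1)" using qq_pos[of s] by simp
  have "TT 0 s - real u * (real u + 1) * VV s = qq s / (real s + 1) - qq s / (real s + 1) * (real u * (real u + 1) / (real s + 2))"
    by (simp add: TT_0 VV_def)
  also have "\<dots> = qq s / (real s + 1) * (1 - real u * (real u + 1) / (real s + 2))"
    by (simp add: right_diff_distrib)
  also have "\<dots> \<le> qq s / (real s + 1) * pr u s"
    by (rule mult_left_mono[OF pr_lower a])
  finally show ?thesis by (simp add: TT_def)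
qed

lemma alg2: fixes a p x y :: real assumes "x \<ge> 0" "y \<ge> 0"
  shows "a * (2*x+1) / (2*x+2) / (x+2) * (p*(x+1)*(x+2)/(x+2+y)) = a*(2*x+1)*p/(2*(x+2+y))"
proof -
  have n0: "2*x+2 \<noteq> 0" "x+2 \<noteq> 0" "x+2+y \<noteq> 0" using assms by linarith+
  have n: "2*x+2 \<noteq> 0" "x+2 \<noteq> 0" "x+2+y \<noteq> 0" "2*(x+2+y) \<noteq> 0" using n0 by simp_all
  have "inverse (2*x+2) * (2*x+2) = 1" "inverse (x+2) * (x+2) = 1" "inverse (x+2+y) * (x+2+y) = 1"
       "inverse (2*(x+2+y)) * (2*(x+2+y)) = 1"
    using n by (auto intro: left_inverse)
  then show ?thesis unfolding divide_inverse by algebra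
qed

lemma TT_Suc_eq: "(real (Suc s) - real u) * TT u (Suc s) = qq s * (2 * real s + 1) * pr u s / (2 * (real s + 2 + real u))"
proof -
  have d: "real s + 2 + real u > 0" by simp
  have h: "(real s + 1 - real u) * pr u (Suc s) = pr u s * (real s + 1) * (real s + 2) / (real s + 2 + real u)"
    using pr_shift[of u s] d by (simp add: field_simps)
  have t: "TT u (Suc s) = qq (Suc s) / (real s + 2) * pr u (Suc s)"
    by (simp add: TT_def add.commute add.left_commute)
  have "(real (Suc s) - real u) * TT u (Suc s) = qq (Suc s) / (real s + 2) * ((real s + 1 - real u) * pr u (Suc s))"
    unfolding t by (simp add: ac_simps)
  also have "\<dots> = qq (Suc s) / (real s + 2) * (pr u s * (real s + 1) * (real s + 2) / (real s + 2 + real u))"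
    by (simp only: h)
  also have "\<dots> = qq s * (2 * real s + 1) * pr u s / (2 * (real s + 2 + real u))"
    unfolding qq_Suc by (rule alg2) auto
  finally show ?thesis .
qed

lemma WZ_alg: fixes x y X :: real assumes "x \<ge> 0" "y \<ge> 0"
  shows "(2*y+3)*(X/(x+1)*((x-y)/(x+y+2))) - (2*y+1)*(X/(x+1)) = 4*(x-y)*(X/(x+1)) - 2*X*(2*x+1)/(x+2+y)"
proof -
  have a: "x+1 \<noteq> 0" "x+y+2 \<noteq> 0" using assms by linarith+
  define Z where "Z = X/(x+1)"
  define W where "W = 1/(x+y+2)"
  have hZ: "X = Z*(x+1)" using a unfolding Z_def by simp
  have hW: "W*(x+y+2) = 1" using a unfolding W_def by simp
  have e1: "X/(x+1)*((x-y)/(x+y+2)) = Z*(x-y)*W" unfolding Z_def W_def by simp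
  have e2: "2*X*(2*x+1)/(x+2+y) = 2*X*(2*x+1)*W" unfolding W_def by (simp add: add_ac)
  have e3: "X/(x+1) = Z" unfolding Z_def ..
  show ?thesis unfolding e1 unfolding e2 e3 using hZ hW by algebra
qed

lemma WZ: "(2 * real u + 3) * TT (Suc u) s - (2 * real u + 1) * TT u s
   = 4 * (real s - real u) * TT u s - 4 * (real (Suc s) - real u) * TT u (Suc s)"
proof -
  have e: "4 * (real (Suc s) - real u) * TT u (Suc s) = 2 * (qq s * pr u s) * (2 * real s + 1) / (real s + 2 + real u)"
    using TT_Suc_eq[of s u] by (simp add: field_simps)
  have h1: "TT (Suc u) s = (qq s * pr u s) / (real s + 1) * ((real s - real u) / (real s + real u + 2))"
    by (simp add: TT_def pr_Suc)
  have h2: "TT u s = (qq s * pr u s) / (real s + 1)" by (simp add: TT_def)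
  show ?thesis unfolding e h1 h2 by (rule WZ_alg) auto
qed

lemma g0: "(real 0 - real u) * TT u 0 = 0"
  by (cases u) (simp_all add: TT_zero)

lemma WZ_sum: "(2 * real u + 3) * (\<Sum>s<N. TT (Suc u) s) - (2 * real u + 1) * (\<Sum>s<N. TT u s)
   = - 4 * (real N - real u) * TT u N"
proof -
  have "(2 * real u + 3) * (\<Sum>s<N. TT (Suc u) s) - (2 * real u + 1) * (\<Sum>s<N. TT u s)
      = (\<Sum>s<N. (2 * real u + 3) * TT (Suc u) s - (2 * real u + 1) * TT u s)"
    by (simp add: sum_distrib_left sum_subtractf)
  also have "\<dots> = (\<Sum>s<N. 4 * (real s - real u) * TT u s - 4 * (real (Suc s) - real u) * TT u (Suc s))"
    by (simp only: WZ)
  also have "\<dots> = 4 * (real 0 - real u) * TT u 0 - 4 * (real N - real u) * TT u N"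
    by (rule sum_lessThan_telescope'[where f = "\<lambda>s. 4 * (real s - real u) * TT u s"])
  also have "\<dots> = - 4 * (real N - real u) * TT u N"
  proof -
    have z: "4 * (real 0 - real u) * TT u 0 = 0" using g0[of u] by simp
    show ?thesis unfolding z by algebra
  qed
  finally show ?thesis .
qed

lemma boundary_tendsto: "(\<lambda>N. (real N - real u) * TT u N) \<longlonglongrightarrow> 0"
proof (rule Lim_null_comparison[OF _ qq_tendsto])
  show "\<forall>\<^sub>F N in sequentially. norm ((real N - real u) * TT u N) \<le> qq N"
  proof (intro always_eventually allI)
    fix N
    show "norm ((real N - real u) * TT u N) \<le> qq N"
    proof (cases "u \<le> N")
      case True
      have "norm ((real N - real u) * TT u N) = (real N - real u) * TT u N"
        using True TT_nonneg[of u N] by simp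
      also have "\<dots> \<le> (real N + 1) * TT 0 N"
        using True TT_nonneg[of u N] TT_le[of u N] by (intro mult_mono) auto
      also have "\<dots> = qq N" by (simp add: TT_0)
      finally show ?thesis .
    next
      case False then show ?thesis using qq_pos[of N] by (simp add: TT_zero)
    qed
  qed
qed

lemma v: "((2 * real u + 1) * (2 / (2 * real u + 1)) - 4 * 0) / (2 * real u + 3) = 2 / (2 * real (Suc u) + 1)"
proof -
  have p: "inverse (2*real u + 1) * (2*real u + 1) = 1" by (intro left_inverse) (simp add: add_pos_nonneg)
  have "(2 * real u + 1) * (2 / (2 * real u + 1)) = 2" using p unfolding divide_inverse by algebra
  then show ?thesis by (simp add: add_ac)
qed

lemma TT_sums: "TT u sums (2 / (2 * real u + 1))"
proof (induction u)
  case 0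
  have "(\<lambda>n. 2 * qq n - 2 * qq (Suc n)) sums (2 * qq 0 - 0)"
    by (rule telescope_sums') (intro tendsto_mult_right_zero qq_tendsto)
  then show ?case by (simp add: TT_0_tele[abs_def])
next
  case (Suc u)
  have eq: "(\<Sum>s<N. TT (Suc u) s) = ((2 * real u + 1) * (\<Sum>s<N. TT u s) - 4 * ((real N - real u) * TT u N)) / (2 * real u + 3)" for N
    using WZ_sum[of u N] by (simp add: field_simps)
  have "(\<lambda>N. ((2 * real u + 1) * (\<Sum>s<N. TT u s) - 4 * ((real N - real u) * TT u N)) / (2 * real u + 3))
        \<longlonglongrightarrow> ((2 * real u + 1) * (2 / (2 * real u + 1)) - 4 * 0) / (2 * real u + 3)"
    using Suc[unfolded sums_def] boundary_tendsto[of u]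
    by (intro tendsto_intros) auto
  moreover note v
  ultimately have "(\<lambda>N. \<Sum>s<N. TT (Suc u) s) \<longlonglongrightarrow> 2 / (2 * real (Suc u) + 1)"
    by (simp only: eq v)
  then show ?case by (simp add: sums_def)
qed

lemma g_tendsto: "(\<lambda>n. 2 * qq n / (3 * (real n + 1))) \<longlonglongrightarrow> 0"
proof (rule Lim_null_comparison[OF _ qq_tendsto])
  show "\<forall>\<^sub>F n in sequentially. norm (2 * qq n / (3 * (real n + 1))) \<le> qq n"
    using qq_pos by (intro always_eventually allI) (simp add: field_simps less_imp_le)
qed

lemma alg3: fixes a x :: real assumes "x \<ge> 0"
  shows "2*a/(3*(x+1)) - 2*(a*(2*x+1)/(2*x+2))/(3*(x+1+1)) = a/((x+1)*(x+2))"
proof -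
  have n0: "x+1 \<noteq> 0" "x+2 \<noteq> 0" "2*x+2 \<noteq> 0" "x+1+1 \<noteq> 0" using assms by linarith+
  have n: "3*(x+1) \<noteq> 0" "3*(x+1+1) \<noteq> 0" "(x+1)*(x+2) \<noteq> 0" "2*x+2 \<noteq> 0" "x+1+1 = x+2" using n0 by simp_all
  show ?thesis using left_inverse[OF n(1)] left_inverse[OF n(2)] left_inverse[OF n(3)] left_inverse[OF n(4)] n(5)
    unfolding divide_inverse by algebra
qed

lemma VV_tele: "2 * qq k / (3 * (real k + 1)) - 2 * qq (Suc k) / (3 * (real (Suc k) + 1)) = VV k"
proof -
  have "2 * qq k / (3 * (real k + 1)) - 2 * (qq k * (2 * real k + 1) / (2 * real k + 2)) / (3 * (real k + 1 + 1))
        = qq k / ((real k + 1) * (real k + 2))" by (rule alg3) simp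
  then show ?thesis by (simp add: qq_Suc VV_def add_ac)
qed

lemma VV_tail: "(\<lambda>n. VV (n + m)) sums (2 * qq m / (3 * (real m + 1)))"
proof -
  have lim: "(\<lambda>n. 2 * qq (n + m) / (3 * (real (n + m) + 1))) \<longlonglongrightarrow> 0"
    using LIMSEQ_ignore_initial_segment[OF g_tendsto, of m] by simp
  have "(\<lambda>n. 2 * qq (n + m) / (3 * (real (n + m) + 1)) - 2 * qq (Suc n + m) / (3 * (real (Suc n + m) + 1)))
        sums (2 * qq (0 + m) / (3 * (real (0 + m) + 1)) - 0)"
    by (rule telescope_sums'[OF lim])
  moreover have "2 * qq (n + m) / (3 * (real (n + m) + 1)) - 2 * qq (Suc n + m) / (3 * (real (Suc n + m) + 1)) = VV (n + m)" for n
    using VV_tele[of "n + m"] by simp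
  ultimately show ?thesis by simp
qed

lemma TT0_tail: "(\<lambda>n. TT 0 (n + m)) sums (2 * qq m)"
proof -
  have lim: "(\<lambda>n. 2 * qq (n + m)) \<longlonglongrightarrow> 0"
    using LIMSEQ_ignore_initial_segment[OF qq_tendsto, of m] by (intro tendsto_mult_right_zero) simp
  have "(\<lambda>n. 2 * qq (n + m) - 2 * qq (Suc n + m)) sums (2 * qq (0 + m) - 0)"
    by (rule telescope_sums'[OF lim])
  then show ?thesis by (simp add: TT_0_tele)
qed

lemma tail_bounds:
  fixes u m :: nat
  defines "R \<equiv> 2 / (2 * real u + 1) - (\<Sum>s<m. TT u s)"
  shows "R \<le> 2 * qq m" and "2 * qq m - real u * (real u + 1) * (2 * qq m / (3 * (real m + 1))) \<le> R"
proof -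
  have tl: "(\<lambda>n. TT u (n + m)) sums R"
    unfolding R_def by (rule sums_split_initial_segment[OF TT_sums])
  show "R \<le> 2 * qq m"
    by (rule sums_le[OF _ tl TT0_tail]) (rule TT_le)
  have lo: "(\<lambda>n. TT 0 (n + m) - real u * (real u + 1) * VV (n + m)) sums
        (2 * qq m - real u * (real u + 1) * (2 * qq m / (3 * (real m + 1))))"
    by (intro sums_diff sums_mult TT0_tail VV_tail)
  show "2 * qq m - real u * (real u + 1) * (2 * qq m / (3 * (real m + 1))) \<le> R"
    by (intro sums_le[OF _ lo tl] TT_lower)
qed




lemma poch_half: "(-1)^s * pochhammer (1/2 - real s) (s+1) = (1/2 :: real) * pochhammer (1/2) s"
proof (induction s)
  case 0 then show ?case by simp
next
  case (Suc s)
  have e: "1/2 - real (Suc s) + 1 = 1/2 - real s" by simp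
  have "(-1)^(Suc s) * pochhammer (1/2 - real (Suc s)) (Suc s + 1)
      = (-1)^(Suc s) * ((1/2 - real (Suc s)) * pochhammer (1/2 - real s) (s + 1))"
    by (simp only: pochhammer_rec Suc_eq_plus1[symmetric] e)
  also have "\<dots> = (real s + 1/2) * ((-1)^s * pochhammer (1/2 - real s) (s+1))"
    by (simp add: algebra_simps)
  also have "\<dots> = (real s + 1/2) * ((1/2 :: real) * pochhammer (1/2) s)"
    by (simp only: Suc)
  also have "\<dots> = (1/2 :: real) * pochhammer (1/2) (Suc s)"
    by (simp add: pochhammer_Suc algebra_simps)
  finally show ?case .
qed

lemma poch_neg: "u \<le> s \<Longrightarrow> (-1)^u * pochhammer (- real s) u = fact s / fact (s - u)"
proof (induction u)
  case 0 then show ?case by simp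
next
  case (Suc u)
  then have us: "u < s" by simp
  have f: "fact (s - u) = real (s - u) * fact (s - Suc u)"
    using us by (metis Suc_diff_Suc fact_Suc of_nat_mult mult.commute)
  have "(-1)^(Suc u) * pochhammer (- real s) (Suc u) = (real s - real u) * ((-1)^u * pochhammer (- real s) u)"
    by (simp add: pochhammer_Suc algebra_simps)
  also have "\<dots> = (real s - real u) * (fact s / fact (s - u))" using Suc us by simp
  also have "\<dots> = fact s / fact (s - Suc u)"
    using us by (simp add: f of_nat_diff)
  finally show ?case .
qed

lemma alg5: fixes A F1 F2 X Y :: real assumes "X \<noteq> 0" "Y \<noteq> 0" "F1 \<noteq> 0" "F2 \<noteq> 0"
  shows "A / (X * F1 * F2) * (X / Y) = A / (F1 * (Y * F2))"
  using assms by (simp add: field_simps)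

lemma alg4: "inverse F * F = (1::real) \<Longrightarrow> inverse S * S = 1 \<Longrightarrow>
  1 * inverse 2 * P * (F * iU * (iV * iW) * A) = A * iW * (P * inverse F * inverse S * (F * (S * F) * (iU * iV))) * inverse 2"
  by algebra

lemma pr_fact: "u \<le> s \<Longrightarrow> pr u s = fact s * fact (s+1) / (fact (s - u) * fact (s + u + 1))"
proof (induction u)
  case 0 then show ?case by simp
next
  case (Suc u)
  then have us: "u < s" by simp
  have f: "fact (s - u) = (real s - real u) * fact (s - Suc u)"
    using us by (metis Suc_diff_Suc fact_Suc of_nat_mult mult.commute of_nat_diff less_imp_le)
  have g: "fact (s + Suc u + 1) = (real s + real u + 2) * fact (s + u + 1)"
    by (simp add: algebra_simps)
  have "pr (Suc u) s = fact s * fact (s+1) / (fact (s - u) * fact (s + u + 1)) * ((real s - real u) / (real s + real u + 2))"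
    using Suc us by (simp add: pr_Suc)
  also have "\<dots> = fact s * fact (s+1) / (fact (s - Suc u) * fact (s + Suc u + 1))"
    unfolding f g by (rule alg5) (use us in auto)
  finally show ?case .
qed

definition ww :: "nat \<Rightarrow> real" where "ww u = alpha ^ (2*u) / fact (2*u)"

lemma term_eq:
  assumes "u \<le> s"
  shows "(-1)^s * pochhammer (1/2 - real s) (s+1) *
      ((-1)^u * pochhammer (- real s) u / (fact (s+u+1) * fact (2*u)) * (pi^2/36)^u) = ww u * TT u s / 2"
proof -
  have x: "(pi^2/36)^u = alpha ^ (2*u)"
    by (simp add: alpha_def power_mult power_divide)
  have fs: "fact (s+1) = (real s + 1) * (fact s :: real)" by simp
  have "(-1)^s * pochhammer (1/2 - real s) (s+1) *
      ((-1)^u * pochhammer (- real s) u / (fact (s+u+1) * fact (2*u)) * (pi^2/36)^u)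
      = (1/2) * pochhammer (1/2) s * ((fact s / fact (s - u)) / (fact (s+u+1) * fact (2*u)) * alpha ^ (2*u))"
    by (simp only: poch_half poch_neg[OF assms] x flip: mult.assoc)
  also have "\<dots> = ww u * TT u s / 2"
  proof -
    have n1: "(fact s :: real) \<noteq> 0" by simp
    have n2: "real s + 1 \<noteq> 0" by linarith
    show ?thesis
      unfolding ww_def TT_def qq_def pr_fact[OF assms] fs divide_inverse inverse_mult_distrib
      by (rule alg4[OF left_inverse[OF n1] left_inverse[OF n2]])
  qed
  finally show ?thesis .
qed

lemma S4_repr: "S4 t = (\<Sum>u<Suc t. ww u * (\<Sum>s<Suc t. TT u s) / 2)"
proof -
  have "S4 t = (\<Sum>s=0..t. \<Sum>u=0..s. ww u * TT u s / 2)"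
    unfolding S4_def sum_distrib_left by (intro sum.cong refl term_eq) auto
  also have "\<dots> = (\<Sum>s<Suc t. \<Sum>u<Suc t. ww u * TT u s / 2)"
    by (rule sum.cong, force, rule sum.mono_neutral_left, auto simp: TT_zero)
  also have "\<dots> = (\<Sum>u<Suc t. \<Sum>s<Suc t. ww u * TT u s / 2)" by (rule sum.swap)
  also have "\<dots> = (\<Sum>u<Suc t. ww u * (\<Sum>s<Suc t. TT u s) / 2)"
    by (rule sum.cong[OF refl]) (simp only: sum_distrib_left[symmetric] sum_divide_distrib[symmetric])
  finally show ?thesis .
qed

lemma S4_sums: "(\<lambda>u. ww u * (\<Sum>s<Suc t. TT u s) / 2) sums S4 t"
  unfolding S4_repr by (rule sums_finite) (auto simp: TT_zero)

lemma cosh_ser: "ww sums cosh alpha"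
proof -
  have "(\<lambda>n. if even n then alpha ^ n /\<^sub>R fact n else 0) sums cosh alpha" by (rule cosh_converges)
  then have "(\<lambda>n. (\<lambda>n. if even n then alpha ^ n /\<^sub>R fact n else 0) (2*n)) sums cosh alpha"
    by (subst sums_mono_reindex) (auto simp: strict_mono_def elim!: evenE)
  then show ?thesis unfolding ww_def[abs_def] by (simp add: divide_inverse mult_ac)
qed

lemma sinh_ser: "(\<lambda>u. ww u / (2 * real u + 1)) sums (sinh alpha / alpha)"
proof -
  have "(\<lambda>n. if even n then 0 else alpha ^ n /\<^sub>R fact n) sums sinh alpha" by (rule sinh_converges)
  then have "(\<lambda>n. (\<lambda>n. if even n then 0 else alpha ^ n /\<^sub>R fact n) (2*n+1)) sums sinh alpha"
    by (subst sums_mono_reindex) (auto simp: strict_mono_def elim!: oddE)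
  then have "(\<lambda>n. alpha ^ (2*n+1) / fact (2*n+1)) sums sinh alpha"
    by (simp add: divide_inverse_commute)
  then have "(\<lambda>n. alpha ^ (2*n+1) / fact (2*n+1) / alpha) sums (sinh alpha / alpha)"
    by (rule sums_divide)
  moreover have "alpha ^ (2*n+1) / fact (2*n+1) / alpha = ww n / (2 * real n + 1)" for n
  proof -
    have a: "alpha \<noteq> 0" by (simp add: alpha_def)
    have "fact (2*n+1) = (2 * real n + 1) * (fact (2*n) :: real)"
      by (simp add: algebra_simps)
    moreover have "alpha ^ (2*n+1) / fact (2*n+1) / alpha = alpha ^ (2*n) / fact (2*n+1)"
      using a by simp
    ultimately show ?thesis by (simp add: ww_def)
  qed
  ultimately show ?thesis by simp
qed




lemma alg6: "inverse F * F = (1::real) \<Longrightarrow> inverse X * X = 1 \<Longrightarrow>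
   P * inverse F = 2 * X * (1 * inverse 2 * P * (inverse X * inverse F))"
  by algebra

lemma G_eq: "(-1)^t * ((-3/2 :: real) gchoose t) = 2 * (real t + 1) * qq (Suc t)"
proof -
  have a: "(-1)^t * ((-3/2 :: real) gchoose t) = pochhammer (3/2) t / fact t"
    by (simp add: gbinomial_pochhammer)
  have b: "pochhammer (1/2 :: real) (Suc t) = 1/2 * pochhammer (3/2) t"
    by (simp add: pochhammer_rec)
  have c: "fact (Suc t) = (real t + 1) * (fact t::real)" by simp
  have n: "(fact t::real) \<noteq> 0" "real t + 1 \<noteq> 0" by simp_all
  show ?thesis unfolding a qq_def b c unfolding divide_inverse inverse_mult_distrib
    by (rule alg6[OF left_inverse[OF n(1)] left_inverse[OF n(2)]])
qed

lemma fact2: "2^u \<le> (fact (2*u) :: real)"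
proof (induction u)
  case 0 then show ?case by simp
next
  case (Suc u)
  have e: "fact (2 * Suc u) = (2 * real u + 2) * (2 * real u + 1) * (fact (2*u) :: real)"
    by (simp add: algebra_simps)
  have "(2::real)^(Suc u) = 2 * 2^u" by simp
  also have "\<dots> \<le> (2 * real u + 2) * (2 * real u + 1) * fact (2*u)"
  proof (rule mult_mono)
    show "2 \<le> (2 * real u + 2) * (2 * real u + 1)"
    proof -
      have "2 * 1 \<le> (2 * real u + 2) * (2 * real u + 1)" by (rule mult_mono) auto
      then show ?thesis by simp
    qed
  qed (use Suc in auto)
  finally show ?case unfolding e .
qed

lemma alpha_pos: "alpha > 0" by (simp add: alpha_def)
lemma alpha_sq: "alpha^2 \<le> 0.275"
proof -
  have "alpha \<le> 0.524" using pi_approx by (simp add: alpha_def)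
  then have "alpha^2 \<le> 0.524^2" using alpha_pos by (intro power_mono) auto
  then show ?thesis by (simp add: power2_eq_square)
qed

lemma ww_pos: "ww u > 0" using alpha_pos by (simp add: ww_def)

lemma ww_geom: "ww u \<le> (alpha^2/2)^u"
proof -
  have "ww u = (alpha^2)^u / fact (2*u)" by (simp add: ww_def power_mult)
  also have "\<dots> \<le> (alpha^2)^u / 2^u"
    using fact2[of u] by (intro divide_left_mono) auto
  finally show ?thesis by (simp add: power_divide)
qed

lemma cosh_le: "cosh alpha \<le> 1 / (1 - alpha^2/2)"
proof -
  have "norm (alpha^2/2) < 1" using alpha_sq by simp
  then have g: "(\<lambda>n. (alpha^2/2)^n) sums (1 / (1 - alpha^2/2))" by (rule geometric_sums)
  show ?thesis by (intro sums_le[OF _ cosh_ser g] ww_geom)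
qed

definition ws :: "nat \<Rightarrow> real" where "ws u = (if u = 0 then 0 else ww (u - 1))"

lemma ws_sums: "ws sums cosh alpha"
proof -
  have "(\<lambda>n. ws (Suc n)) sums cosh alpha" using cosh_ser by (simp add: ws_def)
  then show ?thesis by (subst (asm) sums_Suc_iff) (simp add: ws_def)
qed

lemma h_bound: "ww u * (real u * (real u + 1)) \<le> alpha^2 * ws u"
proof (cases u)
  case 0 then show ?thesis by (simp add: ws_def)
next
  case (Suc k)
  have e: "fact (2 * Suc k) = (2 * real k + 2) * (2 * real k + 1) * (fact (2*k) :: real)"
    by (simp add: algebra_simps)
  have le: "real (Suc k) * (real (Suc k) + 1) \<le> (2 * real k + 2) * (2 * real k + 1)"
    by (simp add: algebra_simps)
  have p: "0 < (2 * real k + 2) * (2 * real k + 1) * (fact (2*k) :: real)" by simp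
  have n: "(2 * real k + 2) * (2 * real k + 1) \<noteq> 0" "(fact (2*k) :: real) \<noteq> 0" by simp_all
  have pw: "alpha ^ (2 * Suc k) = alpha^2 * alpha^(2*k)" by (simp add: power_add power2_eq_square)
  have w: "ww (Suc k) = alpha^2 * ww k / ((2 * real k + 2) * (2 * real k + 1))"
    unfolding ww_def e pw using n by simp
  have "ww u * (real u * (real u + 1)) = alpha^2 * ww k * (real (Suc k) * (real (Suc k) + 1) / ((2 * real k + 2) * (2 * real k + 1)))"
    unfolding Suc w by simp
  also have "\<dots> \<le> alpha^2 * ww k * 1"
    using le ww_pos[of k] by (intro mult_left_mono) (auto simp: divide_le_eq)
  finally show ?thesis by (simp add: ws_def Suc)
qed




lemma alg7: fixes K w P D T :: real assumes "D \<noteq> 0"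
  shows "K * (w * P / 2) - K * (w / D) + w * T = w * (T - K * (2 / D - P) / 2)"
  using assms by (simp add: field_simps)

lemma alg8: fixes K q c D :: real assumes "D \<noteq> 0"
  shows "K * (2 * q - c * (2 * q / D)) / 2 = K * q - c * (K * q) / D"
  using assms by (simp add: field_simps)

lemma alg9: fixes c x :: real assumes "x \<ge> 0"
  shows "c * (1 / (2 * (x + 1))) / (3 * (1 + x + 1)) = c * (1 / (6 * (x + 1) * (x + 2)))"
proof -
  have n: "x + 1 \<noteq> 0" "x + 2 \<noteq> 0" "1 + x + 1 = x + 2" using assms by linarith+
  then show ?thesis by (simp add: field_simps)
qed

lemma alg10: fixes x :: real assumes "x \<ge> 1"
  shows "1 / (2 * x) - 1 / (2 * (x + 1)) \<le> 1 / 2 / x^2"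
proof -
  have n: "x \<noteq> 0" "x + 1 \<noteq> 0" using assms by linarith+
  have "1 / (2 * x) - 1 / (2 * (x + 1)) = 1 / (2 * (x * (x + 1)))"
    using n by (simp add: field_simps)
  also have "\<dots> \<le> 1 / (2 * x^2)"
    using assms by (intro divide_left_mono mult_left_mono) (auto simp: power2_eq_square)
  finally show ?thesis by simp
qed
lemma alg11: fixes x :: real assumes "x \<ge> 1"
  shows "1 / (6 * (x + 1) * (x + 2)) \<le> 1 / 6 / x^2"
proof -
  have "x^2 \<le> (x + 1) * (x + 2)" using assms by (simp add: power2_eq_square algebra_simps)
  then have "1 / (6 * ((x + 1) * (x + 2))) \<le> 1 / (6 * x^2)"
    using assms by (intro divide_left_mono mult_left_mono) auto
  moreover have "6 * (x + 1) * (x + 2) = 6 * ((x + 1) * (x + 2))" by (simp only: mult.assoc)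
  moreover have "1 / 6 / x^2 = 1 / (6 * x^2)" by simp
  ultimately show ?thesis by metis
qed

lemma alg12: fixes C a T :: real
  shows "C * (1 / 2 / T ^ 2 + 1 / 6 / T ^ 2 * a) = C * (1/2 + a/6) / T ^ 2"
  unfolding divide_inverse by (simp add: algebra_simps)

lemma numeric:
  fixes a C T :: real
  assumes a: "0 \<le> a" "a \<le> 0.275" and C: "0 < C" "C \<le> 1 / (1 - a/2)" and T: "T \<ge> 1"
  shows "C * (1/2 + a/6) / T^2 < 13 / (20 * T^2)"
proof -
  have d: "0 < 1 - a/2" using a by simp
  have "C * (1/2 + a/6) \<le> 1 / (1 - a/2) * (1/2 + a/6)"
    using C a by (intro mult_right_mono) auto
  also have "\<dots> < 13/20"
  proof -
    have "(1/2 + a/6) < 13/20 * (1 - a/2)" using a by simp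
    then show ?thesis using d by (simp add: field_simps)
  qed
  finally have "C * (1/2 + a/6) < 13/20" .
  moreover have "T^2 > 0" using T by simp
  ultimately have "C * (1/2 + a/6) / T^2 < (13/20) / T^2" by (rule divide_strict_right_mono)
  also have "(13/20) / T^2 = 13 / (20 * T^2)" by simp
  finally show ?thesis .
qed

theorem mainTheorem13:
  fixes t :: nat
  assumes "t \<ge> 1"
  shows "- 1 / (3 * real t ^ 2) <
           S4 t / ((-1)^t * ((-3/2 :: real) gchoose t))
           - (-1)^t / ((-3/2 :: real) gchoose t) * (sinh alpha / alpha)
           + cosh alpha / (2 * real t)
       \<and> S4 t / ((-1)^t * ((-3/2 :: real) gchoose t))
           - (-1)^t / ((-3/2 :: real) gchoose t) * (sinh alpha / alpha)
           + cosh alpha / (2 * real t) < 13 / (20 * real t ^ 2)"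
proof -
  define m where "m = Suc t"
  define G where "G = (-1)^t * ((-3/2 :: real) gchoose t)"
  have G: "G = 2 * (real t + 1) * qq m" unfolding G_def m_def by (rule G_eq)
  have qpos: "qq m > 0" by (rule qq_pos)
  have Gpos: "G > 0" unfolding G using qpos by simp
  define K where "K = 1 / G"
  have Kpos: "K > 0" unfolding K_def using Gpos by simp
  have Kq: "K * qq m = 1 / (2 * (real t + 1))"
    unfolding K_def G using qpos by simp
  have sg: "(-1::real)^t * (-1)^t = 1" by (simp flip: power_mult_distrib)
  have gch: "((-3/2 :: real) gchoose t) = (-1)^t * G"
    unfolding G_def by (simp add: sg flip: mult.assoc)
  have gch2: "(-1)^t / ((-3/2 :: real) gchoose t) = K"
    unfolding gch K_def by simp
  define E where "E = S4 t / G - K * (sinh alpha / alpha) + cosh alpha / (2 * real t)"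
  have Eeq: "S4 t / ((-1)^t * ((-3/2 :: real) gchoose t))
           - (-1)^t / ((-3/2 :: real) gchoose t) * (sinh alpha / alpha)
           + cosh alpha / (2 * real t) = E"
    unfolding E_def gch2 G_def[symmetric] ..
  define P where "P u = (\<Sum>s<m. TT u s)" for u
  define R where "R u = 2 / (2 * real u + 1) - P u" for u
  define a where "a u = K * (ww u * P u / 2) - K * (ww u / (2 * real u + 1)) + ww u * (1 / (2 * real t))" for u
  have asums: "a sums (K * S4 t - K * (sinh alpha / alpha) + cosh alpha * (1 / (2 * real t)))"
    unfolding a_def P_def m_def by (intro sums_add sums_diff sums_mult sums_mult2 S4_sums sinh_ser cosh_ser)
  have E2: "E = K * S4 t - K * (sinh alpha / alpha) + cosh alpha * (1 / (2 * real t))"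
    unfolding E_def K_def by simp
  have aeq: "a u = ww u * (1 / (2 * real t) - K * R u / 2)" for u
    unfolding a_def R_def by (rule alg7) simp
  define c1 where "c1 = 1 / (2 * real t) - 1 / (2 * (real t + 1))"
  define c2 where "c2 = 1 / (6 * (real t + 1) * (real t + 2))"
  have tp: "real t > 0" using assms by simp
  have "1 / (2 * (real t + 1)) < 1 / (2 * real t)"
    by (rule divide_strict_left_mono) (use tp in auto)
  then have c1pos: "c1 > 0" unfolding c1_def by simp
  have c2pos: "c2 > 0" unfolding c2_def by simp
  have up: "K * R u / 2 \<le> 1 / (2 * (real t + 1))" for u
  proof -
    have "R u \<le> 2 * qq m" unfolding R_def P_def by (rule tail_bounds(1))
    then have "K * R u / 2 \<le> K * (2 * qq m) / 2" using Kpos by (simp add: mult_left_mono)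
    also have "\<dots> = K * qq m" by simp
    finally show ?thesis using Kq by simp
  qed
  have lo: "K * R u / 2 \<ge> 1 / (2 * (real t + 1)) - real u * (real u + 1) * c2" for u
  proof -
    have "2 * qq m - real u * (real u + 1) * (2 * qq m / (3 * (real m + 1))) \<le> R u"
      unfolding R_def P_def by (rule tail_bounds(2))
    then have "K * (2 * qq m - real u * (real u + 1) * (2 * qq m / (3 * (real m + 1)))) / 2 \<le> K * R u / 2"
      using Kpos by (simp add: mult_left_mono)
    moreover have "K * (2 * qq m - real u * (real u + 1) * (2 * qq m / (3 * (real m + 1)))) / 2
        = K * qq m - real u * (real u + 1) * (K * qq m) / (3 * (real m + 1))"
      by (rule alg8) simp
    moreover have "real u * (real u + 1) * (K * qq m) / (3 * (real m + 1)) = real u * (real u + 1) * c2"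
      unfolding Kq unfolding c2_def m_def of_nat_Suc by (rule alg9) simp
    ultimately show ?thesis using Kq by linarith
  qed
  have alo: "a u \<ge> ww u * c1" for u
  proof -
    have "c1 \<le> 1 / (2 * real t) - K * R u / 2" using up[of u] unfolding c1_def by linarith
    then show ?thesis unfolding aeq using ww_pos[of u] by (simp add: mult_left_mono)
  qed
  have aup: "a u \<le> c1 * ww u + (c2 * alpha^2) * ws u" for u
  proof -
    have "1 / (2 * real t) - K * R u / 2 \<le> c1 + real u * (real u + 1) * c2"
      using lo[of u] unfolding c1_def by linarith
    then have "a u \<le> ww u * (c1 + real u * (real u + 1) * c2)"
      unfolding aeq using ww_pos[of u] by (simp add: mult_left_mono)
    also have "\<dots> = c1 * ww u + c2 * (ww u * (real u * (real u + 1)))" by (simp add: algebra_simps)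
    also have "\<dots> \<le> c1 * ww u + c2 * (alpha^2 * ws u)"
      using h_bound[of u] c2pos by (simp add: mult_left_mono)
    finally show ?thesis by (simp add: mult_ac)
  qed
  have Eval: "a sums E" using asums E2 by simp
  have Epos: "E > 0"
  proof -
    have "0 < suminf a"
      using Eval by (intro suminf_pos) (auto intro: less_le_trans[OF _ alo] simp: sums_iff c1pos ww_pos)
    then show ?thesis using Eval by (simp add: sums_iff)
  qed
  have bs: "(\<lambda>u. c1 * ww u + (c2 * alpha^2) * ws u) sums (c1 * cosh alpha + (c2 * alpha^2) * cosh alpha)"
    by (intro sums_add sums_mult cosh_ser ws_sums)
  have Ele: "E \<le> cosh alpha * (c1 + c2 * alpha^2)"
    using sums_le[OF aup Eval bs] by (simp add: algebra_simps)
  have T: "real t \<ge> 1" using assms by simp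
  have c1le: "c1 \<le> 1 / 2 / real t ^ 2"
    unfolding c1_def using T by (rule alg10)
  have c2le: "c2 \<le> 1 / 6 / real t ^ 2"
    unfolding c2_def using T by (rule alg11)
  have coshpos: "cosh alpha > 0" by simp
  have "cosh alpha * (c1 + c2 * alpha^2) \<le> cosh alpha * (1 / 2 / real t ^ 2 + 1 / 6 / real t ^ 2 * alpha^2)"
    using c1le c2le coshpos by (intro mult_left_mono add_mono mult_right_mono) auto
  also have "\<dots> = cosh alpha * (1/2 + alpha^2/6) / real t ^ 2" by (rule alg12)
  also have "\<dots> < 13 / (20 * real t ^ 2)"
    by (rule numeric[OF _ alpha_sq coshpos cosh_le T]) simp
  finally have Eup: "E < 13 / (20 * real t ^ 2)" using Ele by linarith
  have "- 1 / (3 * real t ^ 2) < 0" using T by simp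
  then show ?thesis unfolding Eeq using Epos Eup by linarith
qed


end
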